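(* Let $n,m\ge1$ and $A\subseteq\Omega_n$. If $\mu_n(A)=0$, then $\mu_{n+m}(A\times\{0,1\}^m)=0$.
   Context: For $n\ge1$, $\Omega_n$ is the set of strings $\omega=\alpha_0\alpha_1\cdots\alpha_n$ with $\alpha_k\in\{0,1\}$, $\alpha_0=0$. For $\omega=\alpha_0\cdots\alpha_n$, $\omega'=\alpha'_0\cdots\alpha'_n\in\Omega_n$ let $D^n(\omega,\omega')=2^{-n}\prod_{k=1}^n i^{|\alpha_k-\alpha_{k-1}|}\prod_{k=1}^n i^{-|\alpha'_k-\alpha'_{k-1}|}\,\delta_{\alpha_n\alpha'_n}$ ($i=\sqrt{-1}$), and for $A\subseteq\Omega_n$ let $\mu_n(A)=\sum_{\omega,\omega'\in A}D^n(\omega,\omega')$ ($A$ is called precluded if $\mu_n(A)=0$). For $A\subseteq\Omega_n$, $A\times\{0,1\}^m\subseteq\Omega_{n+m}$ is the set of strings obtained by appending to the right of some $\omega\in A$ an arbitrary string of $m$ bits. *)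

theory Defs
  imports Complex_Main
begin

definition Omega :: "nat \<Rightarrow> nat list set" where
  "Omega n = {w. length w = Suc n \<and> w ! 0 = 0 \<and> set w \<subseteq> {0, 1}}"

definition D :: "nat \<Rightarrow> nat list \<Rightarrow> nat list \<Rightarrow> complex" where
  "D n w w' = (1 / 2 ^ n)
     * (\<Prod>k\<in>{1..n}. \<i> ^ nat \<bar>int (w ! k) - int (w ! (k - 1))\<bar>)
     * (\<Prod>k\<in>{1..n}. \<i> powi (- \<bar>int (w' ! k) - int (w' ! (k - 1))\<bar>))
     * (if w ! n = w' ! n then 1 else 0)"

definition mu :: "nat \<Rightarrow> nat list set \<Rightarrow> complex" where
  "mu n A = (\<Sum>w\<in>A. \<Sum>w'\<in>A. D n w w')"

text \<open>A \<times> {0,1}^m: append an arbitrary string of m bits to the right of some element of A.\<close>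
definition ext :: "nat list set \<Rightarrow> nat \<Rightarrow> nat list set" where
  "ext A m = {w @ v | w v. w \<in> A \<and> length v = m \<and> set v \<subseteq> {0, 1}}"

end

theory Submission
  imports Defs
begin

definition F :: "nat \<Rightarrow> nat list \<Rightarrow> complex" where
  "F n w = (\<Prod>k\<in>{1..n}. \<i> ^ nat \<bar>int (w ! k) - int (w ! (k - 1))\<bar>)"
definition G :: "nat \<Rightarrow> nat list \<Rightarrow> complex" where
  "G n w = (\<Prod>k\<in>{1..n}. \<i> powi (- \<bar>int (w ! k) - int (w ! (k - 1))\<bar>))"

lemma D_FG: "D n w w' = (1/2^n) * F n w * G n w' * (if w ! n = w' ! n then 1 else 0)"
  unfolding D_def F_def G_def by simp

lemma F_snoc:
  assumes "length w = Suc n"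
  shows "F (Suc n) (w @ [b]) = F n w * \<i> ^ nat \<bar>int b - int (w ! n)\<bar>"
proof -
  have "F (Suc n) (w @ [b]) = (\<Prod>k\<in>{1..n}. \<i> ^ nat \<bar>int ((w@[b]) ! k) - int ((w@[b]) ! (k - 1))\<bar>)
        * \<i> ^ nat \<bar>int ((w@[b]) ! Suc n) - int ((w@[b]) ! n)\<bar>"
    unfolding F_def by (simp add: atLeastAtMostSuc_conv mult.commute)
  also have "(\<Prod>k\<in>{1..n}. \<i> ^ nat \<bar>int ((w@[b]) ! k) - int ((w@[b]) ! (k - 1))\<bar>) = F n w"
    unfolding F_def using assms by (intro prod.cong) (auto simp: nth_append)
  finally show ?thesis using assms by (simp add: nth_append)
qed

lemma G_snoc:
  assumes "length w = Suc n"
  shows "G (Suc n) (w @ [b]) = G n w * \<i> powi (- \<bar>int b - int (w ! n)\<bar>)"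
proof -
  have "G (Suc n) (w @ [b]) = (\<Prod>k\<in>{1..n}. \<i> powi (- \<bar>int ((w@[b]) ! k) - int ((w@[b]) ! (k - 1))\<bar>))
        * \<i> powi (- \<bar>int ((w@[b]) ! Suc n) - int ((w@[b]) ! n)\<bar>)"
    unfolding G_def by (simp add: atLeastAtMostSuc_conv mult.commute)
  also have "(\<Prod>k\<in>{1..n}. \<i> powi (- \<bar>int ((w@[b]) ! k) - int ((w@[b]) ! (k - 1))\<bar>)) = G n w"
    unfolding G_def using assms by (intro prod.cong) (auto simp: nth_append)
  finally show ?thesis using assms by (simp add: nth_append)
qed

lemma inner:
  assumes "a \<in> {0,1}" "a' \<in> {0,1::nat}"
  shows "(\<Sum>b\<in>{0,1::nat}. \<Sum>b'\<in>{0,1::nat}.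
     (1/2) * \<i> ^ nat \<bar>int b - int a\<bar> * \<i> powi (- \<bar>int b' - int a'\<bar>) * (if b = b' then 1 else 0))
     = (if a = a' then 1 else 0)"
  using assms by (auto simp: power_int_minus)

lemma D_step:
  assumes "length w = Suc n" "length w' = Suc n" "w ! n \<in> {0,1}" "w' ! n \<in> {0,1}"
  shows "(\<Sum>b\<in>{0,1::nat}. \<Sum>b'\<in>{0,1::nat}. D (Suc n) (w @ [b]) (w' @ [b'])) = D n w w'"
proof -
  have eq: "\<And>b b'. D (Suc n) (w @ [b]) (w' @ [b']) = ((1/2^n) * F n w * G n w') *
     ((1/2) * \<i> ^ nat \<bar>int b - int (w!n)\<bar> * \<i> powi (- \<bar>int b' - int (w'!n)\<bar>) * (if b = b' then 1 else 0))"
    using assms by (simp add: D_FG F_snoc G_snoc nth_append mult_ac)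
  have "(\<Sum>b\<in>{0,1::nat}. \<Sum>b'\<in>{0,1::nat}. D (Suc n) (w @ [b]) (w' @ [b'])) =
     ((1/2^n) * F n w * G n w') * (\<Sum>b\<in>{0,1::nat}. \<Sum>b'\<in>{0,1::nat}.
     (1/2) * \<i> ^ nat \<bar>int b - int (w!n)\<bar> * \<i> powi (- \<bar>int b' - int (w'!n)\<bar>) * (if b = b' then 1 else 0))"
    by (simp only: eq sum_distrib_left)
  also have "\<dots> = D n w w'" using inner[OF assms(3,4)] by (simp add: D_FG)
  finally show ?thesis .
qed

lemma ext1: "ext B 1 = (\<lambda>(w,b). w @ [b]) ` (B \<times> {0,1})"
proof
  show "ext B 1 \<subseteq> (\<lambda>(w,b). w @ [b]) ` (B \<times> {0,1})"
  proof
    fix u assume "u \<in> ext B 1"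
    then obtain w v where "u = w @ v" "w \<in> B" "length v = 1" "set v \<subseteq> {0,1}"
      unfolding ext_def by blast
    then obtain b where "v = [b]" "b \<in> {0,1}" by (auto simp: length_Suc_conv)
    then show "u \<in> (\<lambda>(w,b). w @ [b]) ` (B \<times> {0,1})"
      using \<open>u = w @ v\<close> \<open>w \<in> B\<close> by force
  qed
next
  show "(\<lambda>(w,b). w @ [b]) ` (B \<times> {0,1}) \<subseteq> ext B 1"
    unfolding ext_def by force
qed

lemma mu_step:
  assumes "B \<subseteq> Omega n"
  shows "mu (Suc n) (ext B 1) = mu n B"
proof -
  have len: "\<And>w. w \<in> B \<Longrightarrow> length w = Suc n"
    using assms unfolding Omega_def by blast
  have bit: "\<And>w. w \<in> B \<Longrightarrow> w ! n \<in> {0,1}"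
  proof -
    fix w assume "w \<in> B"
    then have "length w = Suc n" "set w \<subseteq> {0,1}" using assms unfolding Omega_def by blast+
    then have "w ! n \<in> set w" by simp
    then show "w ! n \<in> {0,1}" using \<open>set w \<subseteq> {0,1}\<close> by blast
  qed
  have inj: "inj_on (\<lambda>(w,b). w @ [b]) (B \<times> {0,1::nat})"
    by (auto simp: inj_on_def)
  have "mu (Suc n) (ext B 1) = (\<Sum>(w,b)\<in>B \<times> {0,1}. \<Sum>(w',b')\<in>B \<times> {0,1}. D (Suc n) (w@[b]) (w'@[b']))"
    unfolding mu_def ext1 sum.reindex[OF inj] o_def by (simp only: case_prod_unfold)
  also have "\<dots> = (\<Sum>w\<in>B. \<Sum>b\<in>{0,1}. \<Sum>w'\<in>B. \<Sum>b'\<in>{0,1}. D (Suc n) (w@[b]) (w'@[b']))"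
    by (simp only: sum.cartesian_product' prod.case)
  also have "\<dots> = (\<Sum>w\<in>B. \<Sum>w'\<in>B. \<Sum>b\<in>{0,1}. \<Sum>b'\<in>{0,1}. D (Suc n) (w@[b]) (w'@[b']))"
    by (rule sum.cong[OF refl], rule sum.swap)
  also have "\<dots> = (\<Sum>w\<in>B. \<Sum>w'\<in>B. D n w w')"
  proof (rule sum.cong[OF refl], rule sum.cong[OF refl])
    fix w w' assume "w \<in> B" "w' \<in> B"
    then show "(\<Sum>b\<in>{0,1}. \<Sum>b'\<in>{0,1}. D (Suc n) (w@[b]) (w'@[b'])) = D n w w'"
      by (intro D_step len bit)
  qed
  finally show ?thesis unfolding mu_def .
qed

lemma ext_Omega: "A \<subseteq> Omega n \<Longrightarrow> ext A m \<subseteq> Omega (n + m)"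
  unfolding ext_def Omega_def by (auto simp: nth_append; blast)

lemma ext_Suc: "ext A (Suc m) = ext (ext A m) 1"
proof
  show "ext A (Suc m) \<subseteq> ext (ext A m) 1"
  proof
    fix u assume "u \<in> ext A (Suc m)"
    then obtain w v where u: "u = w @ v" "w \<in> A" "length v = Suc m" "set v \<subseteq> {0,1}"
      unfolding ext_def by blast
    then obtain v' b where v: "v = v' @ [b]" by (cases v rule: rev_cases) auto
    have "w @ v' \<in> ext A m" unfolding ext_def using u v by auto
    moreover have "set [b] \<subseteq> {0,1}" "length [b] = 1" using u v by auto
    moreover have "u = (w @ v') @ [b]" using u v by simp
    ultimately show "u \<in> ext (ext A m) 1" unfolding ext_def by blast
  qed
next
  show "ext (ext A m) 1 \<subseteq> ext A (Suc m)"
  proof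
    fix u assume "u \<in> ext (ext A m) 1"
    then obtain x v where x: "u = x @ v" "x \<in> ext A m" "length v = 1" "set v \<subseteq> {0,1}"
      unfolding ext_def by blast
    then obtain w v' where w: "x = w @ v'" "w \<in> A" "length v' = m" "set v' \<subseteq> {0,1}"
      unfolding ext_def by blast
    have "u = w @ (v' @ v)" "length (v' @ v) = Suc m" "set (v' @ v) \<subseteq> {0,1}" using x w by auto
    then show "u \<in> ext A (Suc m)" unfolding ext_def using w by blast
  qed
qed

lemma ext0: "ext A 0 = A"
  unfolding ext_def by auto

lemma mu_ext: "A \<subseteq> Omega n \<Longrightarrow> mu (n + m) (ext A m) = mu n A"
proof (induction m)
  case 0 then show ?case by (simp add: ext0)
next
  case (Suc m)
  have "mu (n + Suc m) (ext A (Suc m)) = mu (Suc (n + m)) (ext (ext A m) 1)"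
    by (simp only: ext_Suc add_Suc_right)
  also have "\<dots> = mu (n + m) (ext A m)" by (rule mu_step[OF ext_Omega[OF Suc.prems]])
  finally show ?case using Suc by simp
qed

theorem corollary3p3:
  fixes n m :: nat and A :: "nat list set"
  assumes "n \<ge> 1" and "m \<ge> 1" and "A \<subseteq> Omega n" and "mu n A = 0"
  shows "mu (n + m) (ext A m) = 0"
  using mu_ext[OF assms(3)] assms(4) by simp

end
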